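(* For every integer $r\ge0$, \[ \sum_{n=1}^{\infty}\frac{h_n^{(r)}}{(n+1)(n+2)\cdots(n+r+1)}=\frac{1}{r!}, \] equivalently $\sum_{n=1}^{\infty}h_n^{(r)}B(r+1,n+1)=1$.
   Context: Hyperharmonic numbers: $h_n^{(0)}=1/n$ for $n\ge1$, and for $r\ge1$, $h_n^{(r)}=\sum_{j=1}^{n}h_j^{(r-1)}$. $B(x,y)=\int_0^1t^{x-1}(1-t)^{y-1}\,dt$ is the Beta function. *)

theory Defs
  imports "HOL-Analysis.Analysis"
begin

text \<open>Hyperharmonic numbers: hyp 0 n = 1/n (n >= 1), hyp (r+1) n = sum_{j=1}^n hyp r j.
  The value at n = 0 is irrelevant (only n >= 1 is used); for r = 0 it is 1/0 = 0.\<close>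
fun hyp :: "nat \<Rightarrow> nat \<Rightarrow> real" where
  "hyp 0 n = 1 / real n"
| "hyp (Suc r) n = (\<Sum>j=1..n. hyp r j)"

end

theory Submission
  imports Defs "HOL-Real_Asymp.Real_Asymp"
begin

definition D :: "nat \<Rightarrow> nat \<Rightarrow> real" where
  "D s n = 1 / pochhammer (real n + 1) (s + 1)"

definition A :: "nat \<Rightarrow> nat \<Rightarrow> real" where
  "A r N = (\<Sum>n=1..N. hyp r n * D r n)"

lemma poch_pos: "pochhammer (real n + 1) k > 0"
  by (rule pochhammer_pos) simp

lemma prod_poch: "(\<Prod>k=1..r+1. real (m + 1 + k)) = pochhammer (real (m+1) + 1) (r + 1)"
proof -
  have "(\<Prod>k=1..r+1. real (m + 1 + k)) = (\<Prod>i=0..<r+1. real (m+1) + 1 + of_nat i)"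
    by (rule prod.reindex_bij_witness[where i="\<lambda>i. i+1" and j="\<lambda>k. k - 1"]) auto
  also have "\<dots> = pochhammer (real (m+1) + 1) (r + 1)"
    by (simp add: pochhammer_prod)
  finally show ?thesis .
qed

lemma poch_nn: "(0::real) < a \<Longrightarrow> 0 \<le> pochhammer a k"
  using pochhammer_pos[of a k] by simp

lemma D_diff: "D s n - D s (Suc n) = real (s+1) * D (Suc s) n"
proof -
  have e1: "pochhammer (real n + 1) (Suc s + 1) = pochhammer (real n + 1) (s+1) * (real n + 1 + real (s+1))"
    using pochhammer_Suc[of "real n + 1" "s+1"] by (simp add: add_ac)
  have e2: "pochhammer (real n + 1) (Suc s + 1) = (real n + 1) * pochhammer (real (Suc n) + 1) (s+1)"
    using pochhammer_rec[of "real n + 1" "s+1"] by (simp add: add_ac)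
  define p where "p = pochhammer (real n + 1) (s+1)"
  define q where "q = pochhammer (real (Suc n) + 1) (s+1)"
  define t where "t = pochhammer (real n + 1) (Suc s + 1)"
  have pp: "p > 0" "q > 0" unfolding p_def q_def using poch_pos by blast+
  have "t = p * (real n + 1 + real (s+1))" "t = (real n + 1) * q"
    using e1 e2 unfolding p_def q_def t_def by auto
  hence t: "t * q = p * (real n + 1 + real (s+1)) * q" "t * p = (real n + 1) * q * p" by auto
  have "(q - p) * t = t * q - t * p" by (simp add: algebra_simps)
  also have "\<dots> = real (s+1) * p * q" unfolding t by (simp add: algebra_simps)
  finally have "(q - p) * t = real (s+1) * p * q" .
  moreover have "t > 0" unfolding t_def using poch_pos by blast
  ultimately have "1/p - 1/q = real (s+1) / t" using pp
    by (simp add: field_simps)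
  thus ?thesis unfolding D_def p_def q_def t_def by simp
qed

lemma A0: "A 0 N = 1 - 1 / (real N + 1)"
proof (induction N)
  case 0 thus ?case by (simp add: A_def)
next
  case (Suc N)
  have "A 0 (Suc N) = A 0 N + hyp 0 (Suc N) * D 0 (Suc N)"
    by (simp add: A_def)
  also have "\<dots> = 1 - 1 / (real N + 1) + 1 / ((real N + 1) * (real N + 2))"
  proof -
    have "D 0 (Suc N) = 1/(real N + 2)" by (simp add: D_def add_ac)
    moreover have "hyp 0 (Suc N) = 1 / (real N + 1)" by simp
    ultimately show ?thesis using Suc by simp
  qed
  also have "\<dots> = 1 - 1 / (real (Suc N) + 1)"
  proof -
    have g: "\<And>x::real. x \<ge> 0 \<Longrightarrow> 1 - 1/(x+1) + 1/((x+1)*(x+2)) = 1 - 1/(x+2)"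
      by (simp add: divide_simps) (simp add: algebra_simps)
    show ?thesis using g[of "real N"] by (simp add: add_ac)
  qed
  finally show ?case .
qed

lemma A_rec: "A (Suc s) N = (A s N - hyp (Suc s) N * D s (N+1)) / real (s+1)"
proof (induction N)
  case 0 thus ?case by (simp add: A_def)
next
  case (Suc N)
  have h: "hyp (Suc s) (Suc N) = hyp (Suc s) N + hyp s (Suc N)" by simp
  have "A (Suc s) (Suc N) = A (Suc s) N + hyp (Suc s) (Suc N) * D (Suc s) (Suc N)"
    by (simp add: A_def)
  also have "\<dots> = (A s N - hyp (Suc s) N * D s (N+1)) / real (s+1)
       + hyp (Suc s) (Suc N) * (D s (Suc N) - D s (Suc (Suc N))) / real (s+1)"
    using Suc D_diff[of s "Suc N"] by simp
  also have "\<dots> = (A s (Suc N) - hyp (Suc s) (Suc N) * D s (Suc N + 1)) / real (s+1)"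
  proof -
    have a: "A s (Suc N) = A s N + hyp s (Suc N) * D s (Suc N)" by (simp add: A_def)
    have g: "\<And>a b c d e f::real. (a - b*d)/c + (b+e)*(d-f)/c = (a + e*d - (b+e)*f)/c"
      by (simp add: divide_inverse algebra_simps)
    show ?thesis unfolding a h using g by simp
  qed
  finally show ?case .
qed

lemma hyp_nonneg: "hyp r n \<ge> 0"
  by (induction r arbitrary: n) (auto intro: sum_nonneg)

lemma hyp1_harm: "hyp (Suc 0) n = harm n"
  by (simp add: harm_def divide_inverse)

lemma hyp_bound: "hyp (Suc s) n \<le> real n ^ s * harm n"
proof (induction s arbitrary: n)
  case 0 thus ?case using hyp1_harm by simp
next
  case (Suc s)
  have "hyp (Suc (Suc s)) n = (\<Sum>j=1..n. hyp (Suc s) j)" by simp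
  also have "\<dots> \<le> (\<Sum>j=1..n. real n ^ s * harm n)"
  proof (rule sum_mono)
    fix j assume "j \<in> {1..n}"
    hence jn: "j \<le> n" by simp
    have "hyp (Suc s) j \<le> real j ^ s * harm j" by (rule Suc)
    also have "\<dots> \<le> real n ^ s * harm n"
    proof (rule mult_mono)
      show "real j ^ s \<le> real n ^ s" by (rule power_mono) (use jn in auto)
    qed (auto intro: harm_mono jn harm_nonneg)
    finally show "hyp (Suc s) j \<le> real n ^ s * harm n" .
  qed
  also have "\<dots> = real n ^ Suc s * harm n" by simp
  finally show ?case .
qed

lemma poch_ge: "pochhammer (real n + 1) k \<ge> (real n + 1) ^ k"
proof (induction k)
  case 0 thus ?case by simp
next
  case (Suc k)
  have "(real n + 1) ^ Suc k = (real n + 1) ^ k * (real n + 1)" by simp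
  also have "\<dots> \<le> pochhammer (real n + 1) k * (real n + 1 + real k)"
    by (rule mult_mono) (use Suc poch_pos[of n k] in auto)
  also have "\<dots> = pochhammer (real n + 1) (Suc k)" by (simp add: pochhammer_Suc)
  finally show ?case .
qed

lemma harm_over: "(\<lambda>N. harm N / (real N + 1)) \<longlonglongrightarrow> 0"
proof -
  have a: "(\<lambda>N. (harm N - ln (real N)) * (1 / (real N + 1))) \<longlonglongrightarrow> euler_mascheroni * 0"
    by (intro tendsto_mult euler_mascheroni_LIMSEQ) real_asymp
  have b: "(\<lambda>N. ln (real N) / (real N + 1)) \<longlonglongrightarrow> 0" by real_asymp
  have "(\<lambda>N. (harm N - ln (real N)) * (1 / (real N + 1)) + ln (real N) / (real N + 1)) \<longlonglongrightarrow> 0"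
    using tendsto_add[OF a b] by simp
  moreover have "\<And>N. (harm N - ln (real N)) * (1 / (real N + 1)) + ln (real N) / (real N + 1) = harm N / (real N + 1)"
    by (simp add: divide_inverse algebra_simps)
  ultimately show ?thesis by simp
qed

lemma err_lim: "(\<lambda>N. hyp (Suc s) N * D s (N+1)) \<longlonglongrightarrow> 0"
proof (rule tendsto_sandwich[OF _ _ tendsto_const harm_over])
  show "\<forall>\<^sub>F N in sequentially. 0 \<le> hyp (Suc s) N * D s (N+1)"
    by (intro always_eventually allI mult_nonneg_nonneg hyp_nonneg) (simp add: D_def poch_nn)
  show "\<forall>\<^sub>F N in sequentially. hyp (Suc s) N * D s (N+1) \<le> harm N / (real N + 1)"
  proof (rule always_eventually, rule allI)
    fix N
    have pp: "(real N + 1) ^ (s+1) > 0" by simp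
    have "hyp (Suc s) N * D s (N+1) \<le> real N ^ s * harm N / (real N + 1) ^ (s+1)"
    proof -
      have "hyp (Suc s) N * D s (N+1) = hyp (Suc s) N / pochhammer (real (N+1) + 1) (s+1)"
        by (simp add: D_def)
      also have "\<dots> \<le> hyp (Suc s) N / (real N + 1) ^ (s+1)"
      proof (rule divide_left_mono[OF _ _ ])
        show "(real N + 1) ^ (s+1) \<le> pochhammer (real (N+1) + 1) (s+1)"
          using poch_ge[of "N+1" "s+1"] power_mono[of "real N + 1" "real (N+1) + 1" "s+1"] by simp
      next
        show "0 \<le> hyp (Suc s) N" by (rule hyp_nonneg)
      next
        show "0 < pochhammer (real (N+1) + 1) (s+1) * (real N + 1) ^ (s+1)"
          using poch_pos[of "N+1" "s+1"] pp by (rule mult_pos_pos)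
      qed
      also have "\<dots> \<le> real N ^ s * harm N / (real N + 1) ^ (s+1)"
        by (rule divide_right_mono) (use hyp_bound pp in auto)
      finally show ?thesis .
    qed
    also have "\<dots> = (real N / (real N + 1)) ^ s * (harm N / (real N + 1))"
      by (simp add: power_divide field_simps)
    also have "\<dots> \<le> 1 * (harm N / (real N + 1))"
      by (rule mult_right_mono) (auto intro!: power_le_one harm_nonneg divide_nonneg_pos)
    finally show "hyp (Suc s) N * D s (N+1) \<le> harm N / (real N + 1)" by simp
  qed
qed

lemma A_lim: "A r \<longlonglongrightarrow> 1 / fact r"
proof (induction r)
  case 0
  have "(\<lambda>N. 1 - 1 / (real N + 1)) \<longlonglongrightarrow> 1" by real_asymp
  thus ?case by (simp add: A0)
next
  case (Suc s)
  have "(\<lambda>N. (A s N - hyp (Suc s) N * D s (N+1)) / real (s+1)) \<longlonglongrightarrow> (1 / fact s - 0) / real (s+1)"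
    by (intro tendsto_divide tendsto_diff Suc err_lim tendsto_const) simp
  thus ?case by (simp add: A_rec[abs_def] fact_Suc field_simps del: of_nat_Suc)
qed

lemma Beta_eq: "Beta (real r + 1) (real (m + 1) + 1) = fact r / pochhammer (real (m+1) + 1) (r+1)"
proof -
  have nz: "real (m+1) + 1 \<notin> \<int>\<^sub>\<le>\<^sub>0"
    using nonpos_Ints_nonpos[of "real (m+1) + 1"] by auto
  have g1: "Gamma (real r + 1) = fact r" using Gamma_fact[of r] by (simp add: add.commute)
  have g2: "Gamma (real (m+1) + 1) = fact (m+1)" using Gamma_fact[of "m+1"] by (simp add: add.commute)
  have "pochhammer (real (m+1) + 1) (r+1) = Gamma (real (m+1) + 1 + real (r+1)) / Gamma (real (m+1) + 1)"
    using pochhammer_Gamma[OF nz] by simp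
  moreover have "real (m+1) + 1 + real (r+1) = real r + 1 + (real (m + 1) + 1)" by simp
  ultimately show ?thesis unfolding Beta_def g1 g2
    by (simp add: field_simps)
qed

theorem proposition5:
  fixes r :: nat
  shows "(\<lambda>m. hyp r (m + 1) / (\<Prod>k=1..r+1. real (m + 1 + k))) sums (1 / fact r)
       \<and> (\<lambda>m. hyp r (m + 1) * Beta (real r + 1) (real (m + 1) + 1)) sums 1"
proof -
  have t: "(\<lambda>m. hyp r (m + 1) / (\<Prod>k=1..r+1. real (m + 1 + k))) = (\<lambda>m. hyp r (m+1) * D r (m+1))"
    by (rule ext, subst prod_poch) (simp add: D_def)
  have ps: "(\<Sum>m<N. hyp r (m+1) * D r (m+1)) = A r N" for N
    unfolding A_def by (induction N) auto
  have s1: "(\<lambda>m. hyp r (m+1) * D r (m+1)) sums (1 / fact r)"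
    unfolding sums_def ps using A_lim .
  have s2: "(\<lambda>m. fact r * (hyp r (m+1) * D r (m+1))) sums (fact r * (1 / fact r))"
    by (rule sums_mult[OF s1])
  have t2: "(\<lambda>m. hyp r (m + 1) * Beta (real r + 1) (real (m + 1) + 1)) = (\<lambda>m. fact r * (hyp r (m+1) * D r (m+1)))"
    by (rule ext, subst Beta_eq) (simp add: D_def)
  show ?thesis using s1 s2 unfolding t t2 by simp
qed

end
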